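(* Let $d\ge2$ be an integer and $R>0$. There exists $R'>0$ depending only on $R$ (and $d$) such that the following holds: whenever $D_1,\dots,D_d$ are real numbers with $|D_i|\le R$ for all $i$, $D=\sum_iD_i$, and $(\lambda,L)\in\mathbb{R}\times C^1([0,1];\mathbb{R}^d)$ satisfies $$(d-1)\lambda=\sum_{i=1}^dL_i(0)^2-\Big(\sum_{i=1}^dL_i(0)\Big)^2,\qquad L_i'=-\Big(\sum_{k=1}^dL_k\Big)L_i-\lambda\ \text{ on }[0,1],\qquad\int_0^1L_i=D_i$$ for $i=1,\dots,d$, then $|\lambda|<R'$ and $|L_i(r)|<R'$ for all $r\in[0,1]$ and $i=1,\dots,d$. *)

theory Defs
  imports "HOL-Analysis.Analysis"
begin

end

theory Submission
  imports Defs
begin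

lemma mono_within:
  fixes f f' :: "real \<Rightarrow> real"
  assumes d: "\<And>x. x \<in> {a..b} \<Longrightarrow> (f has_real_derivative f' x) (at x within {a..b})"
    and nn: "\<And>x. x \<in> {a..b} \<Longrightarrow> f' x \<ge> 0"
    and xy: "a \<le> x" "x \<le> y" "y \<le> b"
  shows "f x \<le> f y"
proof (rule DERIV_nonneg_imp_increasing_open[of x y f])
  show "x \<le> y" by fact
  fix t assume t: "x < t" "t < y"
  then have "t \<in> interior {a..b}" using xy by auto
  then have "at t within {a..b} = at t" by (rule at_within_interior)
  then have "(f has_real_derivative f' t) (at t)" using d[of t] t xy by auto
  then show "\<exists>y. DERIV f t :> y \<and> y \<ge> 0" using nn[of t] t xy by auto
next
  have "continuous_on {a..b} f" using d by (rule DERIV_continuous_on)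
  then show "continuous_on {x..y} f" by (rule continuous_on_subset) (use xy in auto)
qed

lemma const_within:
  fixes f :: "real \<Rightarrow> real"
  assumes d: "\<And>x. x \<in> {a..b} \<Longrightarrow> (f has_real_derivative 0) (at x within {a..b})"
    and "a \<le> b" "x \<in> {a..b}"
  shows "f x = f a"
proof -
  obtain c where "\<forall>x\<in>{a..b}. f x = c"
    using has_field_derivative_zero_constant[of "{a..b}" f] d by auto
  then show ?thesis using assms by auto
qed

lemma sum_sq_le_sq_sum:
  fixes a :: "nat \<Rightarrow> real"
  assumes "finite A" "\<And>i. i \<in> A \<Longrightarrow> a i \<ge> 0"
  shows "(\<Sum>i\<in>A. (a i)\<^sup>2) \<le> (\<Sum>i\<in>A. a i)\<^sup>2"
proof -
  have "(\<Sum>i\<in>A. (a i)\<^sup>2) \<le> (\<Sum>i\<in>A. a i * (\<Sum>j\<in>A. a j))"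
  proof (rule sum_mono)
    fix i assume i: "i \<in> A"
    have "a i \<le> (\<Sum>j\<in>A. a j)" using assms i by (intro member_le_sum) auto
    then show "(a i)\<^sup>2 \<le> a i * (\<Sum>j\<in>A. a j)" using assms(2)[OF i]
      by (simp add: power2_eq_square mult_left_mono)
  qed
  also have "\<dots> = (\<Sum>i\<in>A. a i)\<^sup>2" by (simp add: power2_eq_square sum_distrib_right)
  finally show ?thesis .
qed

lemma sum_sq_shift:
  fixes f :: "nat \<Rightarrow> real"
  assumes "finite A"
  shows "(\<Sum>k\<in>A. (f k - c)\<^sup>2) = (\<Sum>k\<in>A. (f k)\<^sup>2) - 2*c*(\<Sum>k\<in>A. f k) + real (card A) * c\<^sup>2"
proof -
  have "(\<Sum>k\<in>A. (f k - c)\<^sup>2) = (\<Sum>k\<in>A. (f k)\<^sup>2 - 2*c*f k + c\<^sup>2)" by (intro sum.cong refl) (simp add: power2_diff algebra_simps)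
  also have "\<dots> = (\<Sum>k\<in>A. (f k)\<^sup>2) - (\<Sum>k\<in>A. 2*c*f k) + (\<Sum>k\<in>A. c\<^sup>2)"
    by (simp add: sum.distrib sum_subtractf)
  also have "\<dots> = (\<Sum>k\<in>A. (f k)\<^sup>2) - 2*c*(\<Sum>k\<in>A. f k) + real (card A) * c\<^sup>2"
    by (simp add: sum_distrib_left[symmetric])
  finally show ?thesis .
qed


lemma main_bound:
  fixes d :: nat and R lam :: real and Ds :: "nat \<Rightarrow> real" and L :: "nat \<Rightarrow> real \<Rightarrow> real"
  assumes d2: "d \<ge> 2" and R: "R > 0"
  and hD: "\<forall>i\<in>{1..d}. \<bar>Ds i\<bar> \<le> R"
  and hc: "real (d - 1) * lam = (\<Sum>i=1..d. (L i 0)\<^sup>2) - (\<Sum>i=1..d. L i 0)\<^sup>2"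
  and hder: "\<forall>i\<in>{1..d}. \<forall>x\<in>{0..1}.
               (L i has_real_derivative (- (\<Sum>k=1..d. L k x) * L i x - lam)) (at x within {0..1})"
  and hint: "\<forall>i\<in>{1..d}. (L i has_integral Ds i) {0..1}"
  shows "\<bar>lam\<bar> \<le> (4 * real d * R)\<^sup>2 \<and> (\<forall>r\<in>{0..1}. \<forall>i\<in>{1..d}. \<bar>L i r\<bar> \<le>
     sqrt (2 * (((4 * real d * R)\<^sup>2 + 1 + (4 * real d * R)\<^sup>2) * exp (2 * (4 * real d * R))) + (4 * real d * R)\<^sup>2))"
proof -
  define C where "C = 4 * real d * R"
  define n where "n = real d"
  have n2: "n \<ge> 2" using d2 by (simp add: n_def)
  have C0: "C \<ge> 0" using R by (simp add: C_def)
  define S where "S = (\<lambda>x. \<Sum>k=1..d. L k x)"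
  define kap where "kap = n * lam"
  have hc': "(\<Sum>i=1..d. (L i 0)\<^sup>2) = (n - 1) * lam + (S 0)\<^sup>2"
    using hc d2 by (simp add: S_def n_def of_nat_diff)
  have dL: "\<And>i x. i\<in>{1..d} \<Longrightarrow> x\<in>{0..1} \<Longrightarrow> (L i has_real_derivative (- S x * L i x - lam)) (at x within {0..1})"
    using hder by (auto simp: S_def)
  have dS: "(S has_real_derivative (- (S x)\<^sup>2 - kap)) (at x within {0..1})" if x: "x\<in>{0..1}" for x
  proof -
    have "((\<lambda>x. \<Sum>k=1..d. L k x) has_real_derivative (\<Sum>k=1..d. - S x * L k x - lam)) (at x within {0..1})"
      by (rule DERIV_sum) (use dL x in auto)
    moreover have "(\<Sum>k=1..d. - S x * L k x - lam) = -(S x)\<^sup>2 - kap"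
      by (simp add: sum_subtractf sum_negf sum_distrib_left[symmetric] S_def kap_def n_def power2_eq_square)
    ultimately show ?thesis by (simp add: S_def)
  qed
  have contS: "continuous_on {0..1} S" using dS by (rule DERIV_continuous_on)
  define Dsum where "Dsum = (\<Sum>i=1..d. Ds i)"
  have intS: "(S has_integral Dsum) {0..1}"
    unfolding S_def Dsum_def by (rule has_integral_sum) (use hint in auto)
  have Dsum_le: "\<bar>Dsum\<bar> \<le> n * R"
  proof -
    have "\<bar>Dsum\<bar> \<le> (\<Sum>i=1..d. \<bar>Ds i\<bar>)" unfolding Dsum_def by (rule sum_abs)
    also have "\<dots> \<le> (\<Sum>i=1..d. R)" by (rule sum_mono) (use hD in auto)
    finally show ?thesis by (simp add: n_def)
  qed
  define Q where "Q = (\<lambda>x. integral {0..x} S)"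
  have dQ: "(Q has_real_derivative S x) (at x within {0..1})" if "x\<in>{0..1}" for x
    unfolding Q_def by (rule integral_has_real_derivative[OF contS that])
  define P where "P = (\<lambda>x. exp (Q x))"
  have dP: "(P has_real_derivative P x * S x) (at x within {0..1})" if "x\<in>{0..1}" for x
    unfolding P_def using DERIV_chain2[OF DERIV_exp dQ[OF that]] by simp
  have P0: "P 0 = 1" by (simp add: P_def Q_def)
  have Ppos: "P x > 0" for x by (simp add: P_def)
  define w where "w = (\<lambda>i x. L i x - S x / n)"
  have dw: "(w i has_real_derivative (- S x * w i x)) (at x within {0..1})"
    if i: "i\<in>{1..d}" and x: "x\<in>{0..1}" for i x
  proof -
    have "((\<lambda>x. L i x - S x / n) has_real_derivative ((- S x * L i x - lam) - (- (S x)\<^sup>2 - kap)/n)) (at x within {0..1})"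
      by (intro DERIV_diff DERIV_cdivide dL dS i x)
    moreover have "((- S x * L i x - lam) - (- (S x)\<^sup>2 - kap)/n) = - S x * w i x"
      using n2 by (simp add: w_def kap_def field_simps power2_eq_square)
    ultimately show ?thesis by (simp add: w_def)
  qed
  have wP: "w i x * P x = w i 0" if i: "i\<in>{1..d}" and x: "x\<in>{0..1}" for i x
  proof -
    have "(\<lambda>x. w i x * P x) x = (\<lambda>x. w i x * P x) 0"
    proof (rule const_within[of 0 1])
      fix y :: real assume y: "y \<in> {0..1}"
      show "((\<lambda>x. w i x * P x) has_real_derivative 0) (at y within {0..1})"
        by (rule DERIV_cong[OF DERIV_mult[OF dw[OF i y] dP[OF y]]]) (simp add: algebra_simps)
    qed (use x in auto)
    then show ?thesis by (simp add: P0)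
  qed
  have wform: "w i x = w i 0 / P x" if "i\<in>{1..d}" "x\<in>{0..1}" for i x
    using wP[OF that] Ppos[of x] by (simp add: field_simps)
  have V: "((S x)\<^sup>2 + kap) * (P x)\<^sup>2 = (S 0)\<^sup>2 + kap" if x: "x\<in>{0..1}" for x
  proof -
    have "(\<lambda>x. ((S x)\<^sup>2 + kap) * (P x)\<^sup>2) x = (\<lambda>x. ((S x)\<^sup>2 + kap) * (P x)\<^sup>2) 0"
    proof (rule const_within[of 0 1])
      fix y :: real assume y: "y \<in> {0..1}"
      show "((\<lambda>x. ((S x)\<^sup>2 + kap) * (P x)\<^sup>2) has_real_derivative 0) (at y within {0..1})"
        unfolding power2_eq_square
        by (rule DERIV_cong[OF DERIV_mult[OF DERIV_add[OF DERIV_mult[OF dS[OF y] dS[OF y]] DERIV_const] DERIV_mult[OF dP[OF y] dP[OF y]]]])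
          (simp add: power2_eq_square algebra_simps)
    qed (use x in auto)
    then show ?thesis by (simp add: P0)
  qed
  have W0: "(\<Sum>i=1..d. (w i 0)\<^sup>2) = (n-1)/n * ((S 0)\<^sup>2 + kap)"
  proof -
    have "(\<Sum>i=1..d. (w i 0)\<^sup>2) = (\<Sum>i=1..d. (L i 0)\<^sup>2) - 2*(S 0/n)*(\<Sum>i=1..d. L i 0) + n*(S 0/n)\<^sup>2"
      using sum_sq_shift[of "{1..d}" "\<lambda>k. L k 0" "S 0 / n"] by (simp add: w_def n_def)
    also have "\<dots> = (n-1)*lam + (S 0)\<^sup>2 - (S 0)\<^sup>2/n"
    proof -
      have sumL0: "(\<Sum>i=1..d. L i 0) = S 0" by (simp add: S_def)
      show ?thesis unfolding hc' sumL0 using n2 by (simp add: field_simps power2_eq_square)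
    qed
    also have "\<dots> = (n-1)/n*((S 0)\<^sup>2+kap)" using n2 by (simp add: kap_def field_simps)
    finally show ?thesis .
  qed
  have Wx: "(\<Sum>i=1..d. (w i x)\<^sup>2) = (n-1)/n * ((S x)\<^sup>2 + kap)" if x: "x\<in>{0..1}" for x
  proof -
    have "(\<Sum>i=1..d. (w i x)\<^sup>2) = (\<Sum>i=1..d. (w i 0)\<^sup>2 / (P x)\<^sup>2)"
    proof (rule sum.cong)
      fix i assume "i \<in> {1..d}"
      then show "(w i x)\<^sup>2 = (w i 0)\<^sup>2 / (P x)\<^sup>2" using wform[of i x] x by (simp add: power_divide)
    qed simp
    also have "\<dots> = (\<Sum>i=1..d. (w i 0)\<^sup>2) / (P x)\<^sup>2" by (simp add: sum_divide_distrib)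
    also have "\<dots> = (n-1)/n * (((S 0)\<^sup>2 + kap) / (P x)\<^sup>2)" unfolding W0 by simp
    also have "((S 0)\<^sup>2 + kap) / (P x)\<^sup>2 = (S x)\<^sup>2 + kap"
      using V[OF x] Ppos[of x] by (simp add: field_simps)
    finally show ?thesis .
  qed
  have Ynn: "(S x)\<^sup>2 + kap \<ge> 0" if x: "x\<in>{0..1}" for x
  proof -
    have "0 \<le> (\<Sum>i=1..d. (w i x)\<^sup>2)" by (simp add: sum_nonneg)
    then have "0 \<le> (n-1)/n * ((S x)\<^sup>2 + kap)" using Wx[OF x] by simp
    moreover have "(n-1)/n > 0" using n2 by simp
    ultimately show ?thesis using mult_pos_neg[of "(n-1)/n" "(S x)\<^sup>2 + kap"] by linarith
  qed
  have intw: "\<exists>I. ((\<lambda>x. \<bar>w i x\<bar>) has_integral I) {0..1} \<and> I \<le> 2*R" if i: "i\<in>{1..d}" for i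
  proof -
    have iw: "(w i has_integral (Ds i - Dsum/n)) {0..1}"
      unfolding w_def by (intro has_integral_diff has_integral_divide intS) (use hint i in auto)
    have b: "\<bar>Ds i - Dsum/n\<bar> \<le> 2*R"
    proof -
      have "\<bar>Dsum/n\<bar> \<le> R" using Dsum_le n2 by (simp add: abs_divide field_simps)
      moreover have "\<bar>Ds i\<bar> \<le> R" using hD i by auto
      ultimately show ?thesis by linarith
    qed
    show ?thesis
    proof (cases "w i 0 \<ge> 0")
      case True
      have "\<forall>x\<in>{0..1}. \<bar>w i x\<bar> = w i x"
      proof
        fix x :: real assume "x \<in> {0..1}"
        then have "w i x = w i 0 / P x" by (rule wform[OF i])
        then show "\<bar>w i x\<bar> = w i x" using True Ppos[of x] by simp
      qed
      then have "((\<lambda>x. \<bar>w i x\<bar>) has_integral (Ds i - Dsum/n)) {0..1}"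
        using iw by (subst has_integral_cong) auto
      then show ?thesis using b by auto
    next
      case False
      have "\<forall>x\<in>{0..1}. \<bar>w i x\<bar> = - w i x"
      proof
        fix x :: real assume "x \<in> {0..1}"
        then have "w i x = w i 0 / P x" by (rule wform[OF i])
        moreover have "w i 0 / P x < 0" using False Ppos[of x] by (simp add: divide_neg_pos)
        ultimately show "\<bar>w i x\<bar> = - w i x" by (simp only:)
      qed
      then have "((\<lambda>x. \<bar>w i x\<bar>) has_integral - (Ds i - Dsum/n)) {0..1}"
        using has_integral_neg[OF iw] by (subst has_integral_cong) auto
      then show ?thesis using b by auto
    qed
  qed
  then obtain Iw where Iw: "\<And>i. i\<in>{1..d} \<Longrightarrow> ((\<lambda>x. \<bar>w i x\<bar>) has_integral Iw i) {0..1} \<and> Iw i \<le> 2*R"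
    by metis
  define sw where "sw = (\<lambda>x. \<Sum>i=1..d. \<bar>w i x\<bar>)"
  have intsw: "(sw has_integral (\<Sum>i=1..d. Iw i)) {0..1}"
    unfolding sw_def by (rule has_integral_sum) (use Iw in auto)
  have Isw: "(\<Sum>i=1..d. Iw i) \<le> n * (2*R)"
  proof -
    have "(\<Sum>i=1..d. Iw i) \<le> (\<Sum>i=1..d. 2*R)" by (rule sum_mono) (use Iw in auto)
    then show ?thesis by (simp add: n_def)
  qed
  have swsq: "(S x)\<^sup>2/2 + kap/2 \<le> (sw x)\<^sup>2" if x: "x\<in>{0..1}" for x
  proof -
    have a: "(\<Sum>i=1..d. (w i x)\<^sup>2) \<le> (sw x)\<^sup>2"
      using sum_sq_le_sq_sum[of "{1..d}" "\<lambda>i. \<bar>w i x\<bar>"] by (simp add: sw_def)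
    have b: "((S x)\<^sup>2 + kap)/2 \<le> (n-1)/n * ((S x)\<^sup>2 + kap)"
    proof -
      have "1/2 \<le> (n-1)/n" using n2 by (simp add: field_simps)
      then show ?thesis using Ynn[OF x] by (metis mult_right_mono times_divide_eq_left mult_1 mult.commute)
    qed
    have "(S x)\<^sup>2/2 + kap/2 = ((S x)\<^sup>2 + kap)/2" by simp
    also have "\<dots> \<le> (n-1)/n*((S x)\<^sup>2+kap)" by (rule b)
    also have "\<dots> = (\<Sum>i=1..d. (w i x)\<^sup>2)" by (rule Wx[OF x, symmetric])
    also have "\<dots> \<le> (sw x)\<^sup>2" by (rule a)
    finally show ?thesis .
  qed
  have sw0: "sw x \<ge> 0" for x by (simp add: sw_def sum_nonneg)
  define aS where "aS = (\<lambda>x. \<bar>S x\<bar>)"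
  have contaS: "continuous_on {0..1} aS" unfolding aS_def by (intro continuous_intros contS)
  define JS where "JS = integral {0..1} aS"
  have intaS: "(aS has_integral JS) {0..1}"
    unfolding JS_def using integrable_continuous_interval[OF contaS] by (simp add: has_integral_integral)
  have nR: "n * R \<le> C" using R n2 by (simp add: C_def n_def)
  have nR4: "4 * (n * R) = C" by (simp add: C_def n_def)
  have key: "JS \<le> C \<and> \<bar>kap\<bar> \<le> C\<^sup>2"
  proof (cases "kap \<ge> 0")
    case True
    have p1: "aS x / 2 \<le> sw x" if x: "x\<in>{0..1}" for x
    proof (rule power2_le_imp_le[OF _ sw0])
      have "(aS x / 2)\<^sup>2 = (S x)\<^sup>2 / 4" by (simp add: aS_def power_divide)
      also have "\<dots> \<le> (S x)\<^sup>2/2 + kap/2" using True by simp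
      also have "\<dots> \<le> (sw x)\<^sup>2" by (rule swsq[OF x])
      finally show "(aS x / 2)\<^sup>2 \<le> (sw x)\<^sup>2" .
    qed
    have p2: "sqrt kap / 2 \<le> sw x" if x: "x\<in>{0..1}" for x
    proof (rule power2_le_imp_le[OF _ sw0])
      have "(sqrt kap / 2)\<^sup>2 = kap / 4" using True by (simp add: power_divide)
      also have "\<dots> \<le> (S x)\<^sup>2/2 + kap/2" using True by simp
      also have "\<dots> \<le> (sw x)\<^sup>2" by (rule swsq[OF x])
      finally show "(sqrt kap / 2)\<^sup>2 \<le> (sw x)\<^sup>2" .
    qed
    have "JS / 2 \<le> (\<Sum>i=1..d. Iw i)"
      by (rule has_integral_le[OF has_integral_divide[OF intaS] intsw]) (use p1 in auto)
    then have J: "JS \<le> C" using Isw nR4 by linarith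
    have "sqrt kap / 2 \<le> (\<Sum>i=1..d. Iw i)"
      using has_integral_le[OF has_integral_const_real[of "sqrt kap / 2" 0 1] intsw] p2 by simp
    then have "sqrt kap \<le> C" using Isw nR4 by linarith
    then have "(sqrt kap)\<^sup>2 \<le> C\<^sup>2" by (rule power_mono) (use True in simp)
    then have "kap \<le> C\<^sup>2" using True by simp
    then show ?thesis using J True by simp
  next
    case False
    have Sne: "S x \<noteq> 0" if "x \<in> {0..1}" for x using Ynn[OF that] False by auto
    have sgn: "(\<forall>x\<in>{0..1}. S x > 0) \<or> (\<forall>x\<in>{0..1}. S x < 0)"
    proof (rule ccontr)
      assume "\<not> ?thesis"
      then obtain a b where a: "a\<in>{0..1}" "S a \<le> 0" and b: "b\<in>{0..1}" "S b \<ge> 0" by force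
      have "\<exists>x\<in>{0..1}. S x = 0"
      proof (cases "a \<le> b")
        case True
        have "continuous_on {a..b} S" by (rule continuous_on_subset[OF contS]) (use a b in auto)
        then obtain x where "a \<le> x" "x \<le> b" "S x = 0" using IVT'[of S a 0 b] a b True by auto
        then show ?thesis using a b by auto
      next
        case False
        have "continuous_on {b..a} S" by (rule continuous_on_subset[OF contS]) (use a b in auto)
        then obtain x where "b \<le> x" "x \<le> a" "S x = 0" using IVT2'[of S a 0 b] a b False by auto
        then show ?thesis using a b by auto
      qed
      then show False using Sne by auto
    qed
    have JSD: "JS \<le> C"
    proof -
      from sgn have "JS = Dsum \<or> JS = - Dsum"
      proof
        assume h: "\<forall>x\<in>{0..1}. S x > 0"
        have "(aS has_integral Dsum) {0..1}"
        proof (subst has_integral_cong[of _ _ S])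
          show "aS x = S x" if "x \<in> {0..1}" for x using bspec[OF h that] by (simp add: aS_def)
        qed (rule intS)
        then show ?thesis using intaS by (simp add: has_integral_unique)
      next
        assume h: "\<forall>x\<in>{0..1}. S x < 0"
        have "(aS has_integral - Dsum) {0..1}"
        proof (subst has_integral_cong[of _ _ "\<lambda>x. - S x"])
          show "aS x = - S x" if "x \<in> {0..1}" for x using bspec[OF h that] by (simp add: aS_def)
        qed (rule has_integral_neg[OF intS])
        then show ?thesis using intaS by (simp add: has_integral_unique)
      qed
      then show ?thesis using Dsum_le nR by auto
    qed
    have p: "sqrt (- kap) \<le> aS x" if x: "x\<in>{0..1}" for x
    proof -
      have "sqrt (- kap) \<le> sqrt ((S x)\<^sup>2)" using Ynn[OF x] by (intro real_sqrt_le_mono) simp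
      then show ?thesis by (simp add: aS_def)
    qed
    have "sqrt (- kap) \<le> JS"
      using has_integral_le[OF has_integral_const_real[of "sqrt (- kap)" 0 1] intaS] p by simp
    then have "sqrt (- kap) \<le> C" using JSD by simp
    then have "(sqrt (- kap))\<^sup>2 \<le> C\<^sup>2" by (rule power_mono) (use False in simp)
    then have "- kap \<le> C\<^sup>2" using False by simp
    then show ?thesis using JSD False by simp
  qed
  have JSC: "JS \<le> C" and kapC: "\<bar>kap\<bar> \<le> C\<^sup>2" using key by auto
  obtain x0 where x0: "x0 \<in> {0..1}" "\<And>y. y \<in> {0..1} \<Longrightarrow> aS x0 \<le> aS y"
    using continuous_attains_inf[OF compact_Icc _ contaS] by auto
  have Sx0: "\<bar>S x0\<bar> \<le> C"
  proof -
    have "aS x0 \<le> JS"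
      using has_integral_le[OF has_integral_const_real[of "aS x0" 0 1] intaS] x0 by simp
    then show ?thesis using JSC by (simp add: aS_def)
  qed
  define b2 where "b2 = C\<^sup>2 + 1"
  have b2pos: "b2 > 0" unfolding b2_def by (simp add: add_nonneg_pos)
  define J where "J = (\<lambda>x. integral {0..x} aS)"
  have dJ: "(J has_real_derivative aS x) (at x within {0..1})" if "x\<in>{0..1}" for x
    unfolding J_def by (rule integral_has_real_derivative[OF contaS that])
  have aS0: "aS x \<ge> 0" for x by (simp add: aS_def)
  have J0: "J 0 = 0" by (simp add: J_def)
  have J1: "J 1 = JS" by (simp add: J_def JS_def)
  have Jmono: "J x \<le> J y" if "0 \<le> x" "x \<le> y" "y \<le> 1" for x y
    by (rule mono_within[OF dJ aS0 that])
  define Psi where "Psi = (\<lambda>x. ln (b2 + (S x)\<^sup>2))"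
  define dPsi where "dPsi = (\<lambda>x. 2 * S x * (- (S x)\<^sup>2 - kap) / (b2 + (S x)\<^sup>2))"
  have dPs: "(Psi has_real_derivative dPsi x) (at x within {0..1})" if x: "x\<in>{0..1}" for x
  proof -
    have pos: "0 < b2 + (S x)\<^sup>2" using b2pos by (simp add: add_pos_nonneg)
    have "((\<lambda>x. b2 + S x * S x) has_real_derivative 0 + ((- (S x)\<^sup>2 - kap) * S x + (- (S x)\<^sup>2 - kap) * S x)) (at x within {0..1})"
      by (intro DERIV_add DERIV_const DERIV_mult dS x)
    then have "((\<lambda>x. b2 + (S x)\<^sup>2) has_real_derivative 2 * S x * (- (S x)\<^sup>2 - kap)) (at x within {0..1})"
      by (simp add: power2_eq_square algebra_simps)
    from DERIV_chain2[OF DERIV_ln_divide[OF pos] this]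
    show ?thesis by (simp add: Psi_def dPsi_def)
  qed
  have dPsib: "\<bar>dPsi x\<bar> \<le> 2 * aS x" if x: "x\<in>{0..1}" for x
  proof -
    define Y where "Y = (S x)\<^sup>2 + kap"
    define Z where "Z = b2 + (S x)\<^sup>2"
    have Y0: "Y \<ge> 0" using Ynn[OF x] by (simp add: Y_def)
    have Zp: "Z > 0" using b2pos by (simp add: Z_def add_pos_nonneg)
    have YZ: "Y \<le> Z" using kapC by (simp add: Y_def Z_def b2_def)
    have q: "Y / Z \<le> 1" using YZ Zp by simp
    have "dPsi x = - (2 * S x * (Y / Z))" by (simp add: dPsi_def Y_def Z_def minus_divide_left algebra_simps)
    then have "\<bar>dPsi x\<bar> = 2 * \<bar>S x\<bar> * (Y / Z)" using Y0 Zp by (simp add: abs_mult)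
    also have "\<dots> \<le> 2 * \<bar>S x\<bar> * 1" by (rule mult_left_mono[OF q]) simp
    finally show ?thesis by (simp add: aS_def)
  qed
  have Psib: "Psi x \<le> Psi x0 + 2 * JS" if x: "x\<in>{0..1}" for x
  proof (cases "x0 \<le> x")
    case True
    have "(\<lambda>x. 2 * J x - Psi x) x0 \<le> (\<lambda>x. 2 * J x - Psi x) x"
    proof (rule mono_within[where a=0 and b=1 and f="\<lambda>x. 2 * J x - Psi x" and f'="\<lambda>y. 2 * aS y - dPsi y"])
      fix y :: real assume y: "y \<in> {0..1}"
      show "((\<lambda>x. 2 * J x - Psi x) has_real_derivative 2 * aS y - dPsi y) (at y within {0..1})"
        by (intro DERIV_diff DERIV_cmult dJ dPs y)
      show "2 * aS y - dPsi y \<ge> 0" using dPsib[OF y] by linarith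
    qed (use x x0 True in auto)
    moreover have "J x \<le> J 1" "J 0 \<le> J x0" using x x0 by (auto intro: Jmono)
    ultimately show ?thesis using J0 J1 by simp
  next
    case False
    have "(\<lambda>x. Psi x + 2 * J x) x \<le> (\<lambda>x. Psi x + 2 * J x) x0"
    proof (rule mono_within[where a=0 and b=1 and f="\<lambda>x. Psi x + 2 * J x" and f'="\<lambda>y. dPsi y + 2 * aS y"])
      fix y :: real assume y: "y \<in> {0..1}"
      show "((\<lambda>x. Psi x + 2 * J x) has_real_derivative dPsi y + 2 * aS y) (at y within {0..1})"
        by (intro DERIV_add DERIV_cmult dJ dPs y)
      show "dPsi y + 2 * aS y \<ge> 0" using dPsib[OF y] by linarith
    qed (use x x0 False in auto)
    moreover have "J x0 \<le> J 1" "J 0 \<le> J x" using x x0 by (auto intro: Jmono)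
    ultimately show ?thesis using J0 J1 by simp
  qed
  define B2 where "B2 = (C\<^sup>2 + 1 + C\<^sup>2) * exp (2 * C)"
  have SB: "(S x)\<^sup>2 \<le> B2" if x: "x\<in>{0..1}" for x
  proof -
    have pos: "\<And>y. 0 < b2 + (S y)\<^sup>2" using b2pos by (simp add: add_pos_nonneg)
    have "b2 + (S x)\<^sup>2 = exp (Psi x)" using pos by (simp add: Psi_def)
    also have "\<dots> \<le> exp (Psi x0 + 2 * C)" using Psib[OF x] JSC by simp
    also have "\<dots> = (b2 + (S x0)\<^sup>2) * exp (2 * C)" using pos by (simp add: Psi_def exp_add)
    also have "\<dots> \<le> (b2 + C\<^sup>2) * exp (2 * C)"
    proof -
      have "(S x0)\<^sup>2 \<le> C\<^sup>2" using Sx0 by (metis abs_le_square_iff abs_of_nonneg C0 power2_abs)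
      then show ?thesis by simp
    qed
    finally have "b2 + (S x)\<^sup>2 \<le> (b2 + C\<^sup>2) * exp (2 * C)" .
    moreover have "(b2 + C\<^sup>2) * exp (2 * C) = B2" by (simp add: B2_def b2_def)
    ultimately show ?thesis using b2pos by linarith
  qed
  show ?thesis
  proof
    have "1 * \<bar>lam\<bar> \<le> n * \<bar>lam\<bar>" by (rule mult_right_mono) (use n2 in auto)
    then have "\<bar>lam\<bar> \<le> \<bar>kap\<bar>" using n2 by (simp add: kap_def abs_mult)
    then show "\<bar>lam\<bar> \<le> (4 * real d * R)\<^sup>2" using kapC by (simp add: C_def)
  next
    show "\<forall>r\<in>{0..1}. \<forall>i\<in>{1..d}. \<bar>L i r\<bar> \<le>
     sqrt (2 * (((4 * real d * R)\<^sup>2 + 1 + (4 * real d * R)\<^sup>2) * exp (2 * (4 * real d * R))) + (4 * real d * R)\<^sup>2)"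
    proof (intro ballI)
      fix r i assume r: "r \<in> {0..(1::real)}" and i: "i \<in> {1..d}"
      have sumLr: "(\<Sum>k=1..d. L k r) = S r" by (simp add: S_def)
      have "(\<Sum>k=1..d. (w k r)\<^sup>2) = (\<Sum>k=1..d. (L k r)\<^sup>2) - 2*(S r/n)*(\<Sum>k=1..d. L k r) + n*(S r/n)\<^sup>2"
        using sum_sq_shift[of "{1..d}" "\<lambda>k. L k r" "S r / n"] by (simp add: w_def n_def)
      also have "\<dots> = (\<Sum>k=1..d. (L k r)\<^sup>2) - (S r)\<^sup>2 / n"
        unfolding sumLr using n2 by (simp add: field_simps power2_eq_square)
      finally have sL: "(\<Sum>k=1..d. (L k r)\<^sup>2) = (n-1)/n * ((S r)\<^sup>2 + kap) + (S r)\<^sup>2 / n"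
        using Wx[OF r] by simp
      have m1: "(n-1)/n * ((S r)\<^sup>2 + kap) \<le> 1 * ((S r)\<^sup>2 + kap)"
        by (rule mult_right_mono) (use n2 Ynn[OF r] in auto)
      have m2: "(S r)\<^sup>2 / n \<le> (S r)\<^sup>2"
      proof -
        have "(S r)\<^sup>2 * 1 \<le> (S r)\<^sup>2 * n" by (rule mult_left_mono) (use n2 in auto)
        then show ?thesis using n2 by (simp add: divide_le_eq)
      qed
      have "(\<Sum>k=1..d. (L k r)\<^sup>2) \<le> 1 * ((S r)\<^sup>2 + kap) + (S r)\<^sup>2"
        unfolding sL by (rule add_mono[OF m1 m2])
      also have "\<dots> \<le> 2 * B2 + C\<^sup>2" using SB[OF r] abs_le_D1[OF kapC] by (smt (verit))
      finally have "(\<Sum>k=1..d. (L k r)\<^sup>2) \<le> 2 * B2 + C\<^sup>2" .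
      moreover have "(L i r)\<^sup>2 \<le> (\<Sum>k=1..d. (L k r)\<^sup>2)"
        using i by (intro member_le_sum) auto
      ultimately have "(L i r)\<^sup>2 \<le> 2 * B2 + C\<^sup>2" by linarith
      then have "sqrt ((L i r)\<^sup>2) \<le> sqrt (2 * B2 + C\<^sup>2)" by (rule real_sqrt_le_mono)
      then show "\<bar>L i r\<bar> \<le> sqrt (2 * (((4 * real d * R)\<^sup>2 + 1 + (4 * real d * R)\<^sup>2) * exp (2 * (4 * real d * R))) + (4 * real d * R)\<^sup>2)"
        by (simp add: B2_def C_def)
    qed
  qed
qed


theorem lemma3p7:
  fixes d :: nat and R :: real
  assumes "d \<ge> 2" and "R > 0"
  shows "\<exists>R' > 0. \<forall>(Ds :: nat \<Rightarrow> real) (lam :: real) (L :: nat \<Rightarrow> real \<Rightarrow> real).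
           (\<forall>i\<in>{1..d}. \<bar>Ds i\<bar> \<le> R)
         \<and> real (d - 1) * lam = (\<Sum>i=1..d. (L i 0)\<^sup>2) - (\<Sum>i=1..d. L i 0)\<^sup>2
         \<and> (\<forall>i\<in>{1..d}. \<forall>x\<in>{0..1}.
               (L i has_real_derivative (- (\<Sum>k=1..d. L k x) * L i x - lam)) (at x within {0..1}))
         \<and> (\<forall>i\<in>{1..d}. continuous_on {0..1} (\<lambda>x. - (\<Sum>k=1..d. L k x) * L i x - lam))
         \<and> (\<forall>i\<in>{1..d}. (L i has_integral Ds i) {0..1})
         \<longrightarrow> \<bar>lam\<bar> < R' \<and> (\<forall>r\<in>{0..1}. \<forall>i\<in>{1..d}. \<bar>L i r\<bar> < R')"
proof -
  define C where "C = 4 * real d * R"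
  define M where "M = sqrt (2 * ((C\<^sup>2 + 1 + C\<^sup>2) * exp (2 * C)) + C\<^sup>2)"
  have M0: "M \<ge> 0" unfolding M_def by (intro real_sqrt_ge_zero add_nonneg_nonneg mult_nonneg_nonneg) auto
  show ?thesis
  proof (intro exI[of _ "M + C\<^sup>2 + 1"] conjI allI impI)
    show "M + C\<^sup>2 + 1 > 0" using M0 by (simp add: add_nonneg_pos)
  next
    fix Ds lam and L :: "nat \<Rightarrow> real \<Rightarrow> real"
    assume h: "(\<forall>i\<in>{1..d}. \<bar>Ds i\<bar> \<le> R)
         \<and> real (d - 1) * lam = (\<Sum>i=1..d. (L i 0)\<^sup>2) - (\<Sum>i=1..d. L i 0)\<^sup>2
         \<and> (\<forall>i\<in>{1..d}. \<forall>x\<in>{0..1}.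
               (L i has_real_derivative (- (\<Sum>k=1..d. L k x) * L i x - lam)) (at x within {0..1}))
         \<and> (\<forall>i\<in>{1..d}. continuous_on {0..1} (\<lambda>x. - (\<Sum>k=1..d. L k x) * L i x - lam))
         \<and> (\<forall>i\<in>{1..d}. (L i has_integral Ds i) {0..1})"
    have mb: "\<bar>lam\<bar> \<le> C\<^sup>2 \<and> (\<forall>r\<in>{0..1}. \<forall>i\<in>{1..d}. \<bar>L i r\<bar> \<le> M)"
      using main_bound[of d R Ds lam L] assms h by (simp add: C_def M_def)
    show "\<bar>lam\<bar> < M + C\<^sup>2 + 1" using mb M0 by linarith
    show "\<forall>r\<in>{0..1}. \<forall>i\<in>{1..d}. \<bar>L i r\<bar> < M + C\<^sup>2 + 1"
    proof (intro ballI)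
      fix r i assume "r \<in> {0..(1::real)}" "i \<in> {1..d}"
      then have "\<bar>L i r\<bar> \<le> M" using mb by blast
      then show "\<bar>L i r\<bar> < M + C\<^sup>2 + 1" using zero_le_power2[of C] by linarith
    qed
  qed
qed

end
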